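(* For every $\varphi\in\mathcal{L}_{\mathrm{CL}^{\mathrm{FI}}}$: $\vdash_{\mathrm{CL}^{\mathrm{FI}}}\varphi$ if and only if $\varphi$ is true at every state of every playable coalition model.
   Context: $N=\{1,\dots,n\}$ is a finite set of agents, $\mathrm{Prop}$ a countable set of atoms. $\mathcal{L}_{\mathrm{CL}}$: $\varphi ::= p\mid\neg\varphi\mid(\varphi\wedge\psi)\mid[C]\varphi$ ($C\subseteq N$); $\mathcal{L}_{\mathrm{CL}^{\mathrm{FI}}}$ additionally has the primitive $\mathrm{FI}_C(\varphi)$. Semantics: a coalition model is $\mathcal{M}=(W,E,V)$, $W$ nonempty, $E_w(C)\subseteq\mathcal{P}(W)$, $V:\mathrm{Prop}\to\mathcal{P}(W)$; Boolean clauses classical; $\mathcal{M},w\models[C]\varphi$ iff $[\![\varphi]\!]_{\mathcal{M}}=\{u\mid\mathcal{M},u\models\varphi\}\in E_w(C)$; $\mathcal{M},w\models\mathrm{FI}_C(\varphi)$ iff $[\![\varphi]\!]_{\mathcal{M}}\notin E_w(C)$ and $[\![\neg\varphi]\!]_{\mathcal{M}}\notin E_w(C)$. Playability of $E_w$: for all $C,D\subseteq N$, $X,Y\subseteq W$: $\emptyset\notin E_w(C)$; $W\in E_w(C)$; $X\in E_w(C)$, $X\subseteq Y$ imply $Y\in E_w(C)$; $C\cap D=\emptyset$, $X\in E_w(C)$, $Y\in E_w(D)$ imply $X\cap Y\in E_w(C\cup D)$; $X\notin E_w(\emptyset)$ iff $W\setminus X\in E_w(N)$; the model is playable if each $E_w$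 is. Proof system: Coalition Logic $\mathrm{CL}$ (Pauly) has all propositional tautologies; $\neg[C]\bot$; $[C]\top$; $\neg[\emptyset]\neg\varphi\to[N]\varphi$; $[C](\varphi\wedge\psi)\to[C]\varphi$; $[C_1]\varphi_1\wedge[C_2]\varphi_2\to[C_1\cup C_2](\varphi_1\wedge\varphi_2)$ for disjoint $C_1,C_2$; modus ponens; and rule RE: from $\varphi\leftrightarrow\psi$ infer $[C]\varphi\leftrightarrow[C]\psi$. $\mathrm{CL}^{\mathrm{FI}}$ is these schemes and rules over $\mathcal{L}_{\mathrm{CL}^{\mathrm{FI}}}$ plus the axiom $\mathrm{FI}_C(\varphi)\leftrightarrow(\neg[C]\varphi\wedge\neg[C]\neg\varphi)$. *)

theory Defs
  imports Main
begin

text \<open>Agents: a finite nonempty type 'a, so N = UNIV :: 'a set and coalitions are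
  arbitrary sets of type 'a set. Atoms: Prop = nat (countable).\<close>

datatype 'a fm =
    Atom nat
  | Neg "'a fm"
  | Conj "'a fm" "'a fm"
  | Eff "'a set" "'a fm"
  | FI "'a set" "'a fm"

definition Imp :: "'a fm \<Rightarrow> 'a fm \<Rightarrow> 'a fm" where
  "Imp a b = Neg (Conj a (Neg b))"

definition Iff :: "'a fm \<Rightarrow> 'a fm \<Rightarrow> 'a fm" where
  "Iff a b = Conj (Imp a b) (Imp b a)"

definition Top :: "'a fm" where
  "Top = Neg (Conj (Atom 0) (Neg (Atom 0)))"

definition Bot :: "'a fm" where
  "Bot = Neg Top"

primrec pval :: "('a fm \<Rightarrow> bool) \<Rightarrow> 'a fm \<Rightarrow> bool" where
  "pval v (Atom p) = v (Atom p)"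
| "pval v (Neg a) = (\<not> pval v a)"
| "pval v (Conj a b) = (pval v a \<and> pval v b)"
| "pval v (Eff C a) = v (Eff C a)"
| "pval v (FI C a) = v (FI C a)"

definition tautology :: "'a fm \<Rightarrow> bool" where
  "tautology \<phi> \<longleftrightarrow> (\<forall>v. pval v \<phi>)"

inductive CLFI :: "'a::finite fm \<Rightarrow> bool" where
  taut: "tautology \<phi> \<Longrightarrow> CLFI \<phi>"
| ax_bot: "CLFI (Neg (Eff C Bot))"
| ax_top: "CLFI (Eff C Top)"
| ax_N: "CLFI (Imp (Neg (Eff {} (Neg \<phi>))) (Eff UNIV \<phi>))"
| ax_mono: "CLFI (Imp (Eff C (Conj \<phi> \<psi>)) (Eff C \<phi>))"
| ax_super: "C1 \<inter> C2 = {} \<Longrightarrow>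
    CLFI (Imp (Conj (Eff C1 \<phi>1) (Eff C2 \<phi>2)) (Eff (C1 \<union> C2) (Conj \<phi>1 \<phi>2)))"
| ax_FI: "CLFI (Iff (FI C \<phi>) (Conj (Neg (Eff C \<phi>)) (Neg (Eff C (Neg \<phi>)))))"
| mp: "CLFI (Imp \<phi> \<psi>) \<Longrightarrow> CLFI \<phi> \<Longrightarrow> CLFI \<psi>"
| re: "CLFI (Iff \<phi> \<psi>) \<Longrightarrow> CLFI (Iff (Eff C \<phi>) (Eff C \<psi>))"

record ('a, 'w) cmodel =
  Wo :: "'w set"
  Ef :: "'w \<Rightarrow> 'a set \<Rightarrow> 'w set set"
  Va :: "nat \<Rightarrow> 'w set"

definition coalition_model :: "('a, 'w) cmodel \<Rightarrow> bool" where
  "coalition_model M \<longleftrightarrow> Wo M \<noteq> {}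
     \<and> (\<forall>w \<in> Wo M. \<forall>C. Ef M w C \<subseteq> Pow (Wo M))
     \<and> (\<forall>p. Va M p \<subseteq> Wo M)"

primrec sat :: "('a, 'w) cmodel \<Rightarrow> 'a fm \<Rightarrow> 'w \<Rightarrow> bool" where
  "sat M (Atom p) w = (w \<in> Va M p)"
| "sat M (Neg a) w = (\<not> sat M a w)"
| "sat M (Conj a b) w = (sat M a w \<and> sat M b w)"
| "sat M (Eff C a) w = ({u \<in> Wo M. sat M a u} \<in> Ef M w C)"
| "sat M (FI C a) w = ({u \<in> Wo M. sat M a u} \<notin> Ef M w C
                       \<and> {u \<in> Wo M. \<not> sat M a u} \<notin> Ef M w C)"

definition playable_at :: "('a, 'w) cmodel \<Rightarrow> 'w \<Rightarrow> bool" where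
  "playable_at M w \<longleftrightarrow>
     (\<forall>C. {} \<notin> Ef M w C)
   \<and> (\<forall>C. Wo M \<in> Ef M w C)
   \<and> (\<forall>C X Y. X \<subseteq> Wo M \<longrightarrow> Y \<subseteq> Wo M \<longrightarrow> X \<in> Ef M w C \<longrightarrow> X \<subseteq> Y \<longrightarrow> Y \<in> Ef M w C)
   \<and> (\<forall>C D X Y. X \<subseteq> Wo M \<longrightarrow> Y \<subseteq> Wo M \<longrightarrow> C \<inter> D = {} \<longrightarrow>
        X \<in> Ef M w C \<longrightarrow> Y \<in> Ef M w D \<longrightarrow> X \<inter> Y \<in> Ef M w (C \<union> D))
   \<and> (\<forall>X. X \<subseteq> Wo M \<longrightarrow> (X \<notin> Ef M w {} \<longleftrightarrow> Wo M - X \<in> Ef M w UNIV))"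

definition playable :: "('a, 'w) cmodel \<Rightarrow> bool" where
  "playable M \<longleftrightarrow> coalition_model M \<and> (\<forall>w \<in> Wo M. playable_at M w)"

definition valid_in :: "('a, 'w) cmodel \<Rightarrow> 'a fm \<Rightarrow> bool" where
  "valid_in M \<phi> \<longleftrightarrow> (\<forall>w \<in> Wo M. sat M \<phi> w)"

end

theory Submission
  imports Defs
begin

section \<open>Soundness\<close>

lemma pval_sat: "pval (\<lambda>\<psi>. sat M \<psi> w) \<phi> = sat M \<phi> w"
  by (induction \<phi>) auto

lemma sat_simps2 [simp]:
  "sat M Top w" "\<not> sat M Bot w"
  "sat M (Imp a b) w = (sat M a w \<longrightarrow> sat M b w)"
  "sat M (Iff a b) w = (sat M a w \<longleftrightarrow> sat M b w)"
  by (auto simp: Top_def Bot_def Imp_def Iff_def)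

lemma playable_atD:
  assumes "playable M" "w \<in> Wo M"
  shows "{} \<notin> Ef M w C" "Wo M \<in> Ef M w C"
    "X \<subseteq> Wo M \<Longrightarrow> Y \<subseteq> Wo M \<Longrightarrow> X \<in> Ef M w C \<Longrightarrow> X \<subseteq> Y \<Longrightarrow> Y \<in> Ef M w C"
    "X \<subseteq> Wo M \<Longrightarrow> Y \<subseteq> Wo M \<Longrightarrow> C \<inter> D = {} \<Longrightarrow> X \<in> Ef M w C \<Longrightarrow> Y \<in> Ef M w D
       \<Longrightarrow> X \<inter> Y \<in> Ef M w (C \<union> D)"
    "X \<subseteq> Wo M \<Longrightarrow> (X \<notin> Ef M w {} \<longleftrightarrow> Wo M - X \<in> Ef M w UNIV)"
proof -
  have P: "playable_at M w" using assms unfolding playable_def by (elim conjE) (erule bspec)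
  have 1: "\<forall>C. {} \<notin> Ef M w C" using P unfolding playable_at_def by (elim conjE) assumption
  have 2: "\<forall>C. Wo M \<in> Ef M w C" using P unfolding playable_at_def by (elim conjE) assumption
  have 3: "\<forall>C X Y. X \<subseteq> Wo M \<longrightarrow> Y \<subseteq> Wo M \<longrightarrow> X \<in> Ef M w C \<longrightarrow> X \<subseteq> Y \<longrightarrow> Y \<in> Ef M w C"
    using P unfolding playable_at_def by (elim conjE) assumption
  have 4: "\<forall>C D X Y. X \<subseteq> Wo M \<longrightarrow> Y \<subseteq> Wo M \<longrightarrow> C \<inter> D = {} \<longrightarrow>
        X \<in> Ef M w C \<longrightarrow> Y \<in> Ef M w D \<longrightarrow> X \<inter> Y \<in> Ef M w (C \<union> D)"
    using P unfolding playable_at_def by (elim conjE) assumption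
  have 5: "\<forall>X. X \<subseteq> Wo M \<longrightarrow> (X \<notin> Ef M w {} \<longleftrightarrow> Wo M - X \<in> Ef M w UNIV)"
    using P unfolding playable_at_def by (elim conjE) assumption
  show "{} \<notin> Ef M w C" using 1 by (rule spec)
  show "Wo M \<in> Ef M w C" using 2 by (rule spec)
  show "X \<subseteq> Wo M \<Longrightarrow> Y \<subseteq> Wo M \<Longrightarrow> X \<in> Ef M w C \<Longrightarrow> X \<subseteq> Y \<Longrightarrow> Y \<in> Ef M w C"
    using 3[rule_format, of X Y C] by assumption
  show "X \<subseteq> Wo M \<Longrightarrow> Y \<subseteq> Wo M \<Longrightarrow> C \<inter> D = {} \<Longrightarrow> X \<in> Ef M w C \<Longrightarrow> Y \<in> Ef M w D
       \<Longrightarrow> X \<inter> Y \<in> Ef M w (C \<union> D)"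
    using 4[rule_format, of X Y C D] by assumption
  show "X \<subseteq> Wo M \<Longrightarrow> (X \<notin> Ef M w {} \<longleftrightarrow> Wo M - X \<in> Ef M w UNIV)"
    using 5[rule_format, of X] by assumption
qed

lemma soundness:
  assumes "CLFI \<phi>" "playable M"
  shows "valid_in M \<phi>"
  using assms(1)
proof (induction \<phi> rule: CLFI.induct)
  case (taut \<phi>)
  then show ?case using pval_sat unfolding tautology_def valid_in_def by metis
next
  case (ax_bot C)
  have "{u \<in> Wo M. sat M Bot u} = {}" by simp
  then show ?case using playable_atD(1)[OF assms(2)] unfolding valid_in_def by auto
next
  case (ax_top C)
  have "{u \<in> Wo M. sat M Top u} = Wo M" by simp
  then show ?case using playable_atD(2)[OF assms(2)] unfolding valid_in_def by auto
next
  case (ax_N \<phi>)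
  show ?case unfolding valid_in_def
  proof
    fix w assume w: "w \<in> Wo M"
    define X where "X = {u \<in> Wo M. sat M (Neg \<phi>) u}"
    have X: "X \<subseteq> Wo M" unfolding X_def by auto
    have e: "Wo M - X = {u \<in> Wo M. sat M \<phi> u}" unfolding X_def by auto
    have "X \<notin> Ef M w {} \<longleftrightarrow> Wo M - X \<in> Ef M w UNIV" using playable_atD(5)[OF assms(2) w X] .
    then show "sat M (Imp (Neg (Eff {} (Neg \<phi>))) (Eff UNIV \<phi>)) w"
      using e unfolding X_def by simp
  qed
next
  case (ax_mono C \<phi> \<psi>)
  show ?case unfolding valid_in_def
  proof
    fix w assume w: "w \<in> Wo M"
    have "{u \<in> Wo M. sat M (Conj \<phi> \<psi>) u} \<subseteq> {u \<in> Wo M. sat M \<phi> u}" by auto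
    then show "sat M (Imp (Eff C (Conj \<phi> \<psi>)) (Eff C \<phi>)) w"
      using playable_atD(3)[OF assms(2) w, of "{u \<in> Wo M. sat M (Conj \<phi> \<psi>) u}" "{u \<in> Wo M. sat M \<phi> u}" C]
      by auto
  qed
next
  case (ax_super C1 C2 \<phi>1 \<phi>2)
  show ?case unfolding valid_in_def
  proof
    fix w assume w: "w \<in> Wo M"
    have "{u \<in> Wo M. sat M (Conj \<phi>1 \<phi>2) u} = {u \<in> Wo M. sat M \<phi>1 u} \<inter> {u \<in> Wo M. sat M \<phi>2 u}" by auto
    then show "sat M (Imp (Conj (Eff C1 \<phi>1) (Eff C2 \<phi>2)) (Eff (C1 \<union> C2) (Conj \<phi>1 \<phi>2))) w"
      using playable_atD(4)[OF assms(2) w, of "{u \<in> Wo M. sat M \<phi>1 u}" "{u \<in> Wo M. sat M \<phi>2 u}" C1 C2]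
        ax_super(1) by auto
  qed
next
  case (ax_FI C \<phi>)
  have e: "{u \<in> Wo M. sat M (Neg \<phi>) u} = {u \<in> Wo M. \<not> sat M \<phi> u}" by auto
  show ?case unfolding valid_in_def using e by simp
next
  case (mp \<phi> \<psi>)
  then show ?case unfolding valid_in_def by simp
next
  case (re \<phi> \<psi> C)
  then have "{u \<in> Wo M. sat M \<phi> u} = {u \<in> Wo M. sat M \<psi> u}" unfolding valid_in_def by auto
  then show ?case unfolding valid_in_def by simp
qed


section \<open>Propositional reasoning in CLFI\<close>

primrec conjL :: "'a fm list \<Rightarrow> 'a fm" where
  "conjL [] = Top"
| "conjL (x # xs) = Conj x (conjL xs)"

lemma pval_simps2 [simp]:
  "pval v Top" "\<not> pval v Bot"
  "pval v (Imp a b) = (pval v a \<longrightarrow> pval v b)"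
  "pval v (Iff a b) = (pval v a \<longleftrightarrow> pval v b)"
  by (auto simp: Top_def Bot_def Imp_def Iff_def)

lemma pval_conjL [simp]: "pval v (conjL L) = (\<forall>x\<in>set L. pval v x)"
  by (induction L) auto

lemma taut_mp1: "CLFI a \<Longrightarrow> tautology (Imp a b) \<Longrightarrow> CLFI b"
  using CLFI.taut CLFI.mp by blast

lemma taut_mp2: "CLFI a \<Longrightarrow> CLFI b \<Longrightarrow> tautology (Imp a (Imp b c)) \<Longrightarrow> CLFI c"
  using CLFI.taut CLFI.mp by blast

definition consistent :: "'a::finite fm set \<Rightarrow> bool" where
  "consistent S \<longleftrightarrow> (\<forall>L. set L \<subseteq> S \<longrightarrow> \<not> CLFI (Neg (conjL L)))"

definition mcs :: "'a::finite fm set \<Rightarrow> bool" where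
  "mcs S \<longleftrightarrow> consistent S \<and> (\<forall>\<phi>. \<phi> \<notin> S \<longrightarrow> \<not> consistent (insert \<phi> S))"

lemma incons_insert:
  assumes "\<not> consistent (insert \<phi> S)"
  shows "\<exists>L. set L \<subseteq> S \<and> CLFI (Imp (conjL L) (Neg \<phi>))"
proof -
  obtain L where L: "set L \<subseteq> insert \<phi> S" "CLFI (Neg (conjL L))"
    using assms unfolding consistent_def by blast
  define L' where "L' = filter (\<lambda>x. x \<noteq> \<phi>) L"
  have "set L' \<subseteq> S" using L(1) unfolding L'_def by auto
  moreover have "tautology (Imp (Neg (conjL L)) (Imp (conjL L') (Neg \<phi>)))"
    unfolding tautology_def L'_def by auto
  ultimately show ?thesis using taut_mp1[OF L(2)] by blast
qed

lemma mcs_thm: "mcs S \<Longrightarrow> CLFI \<phi> \<Longrightarrow> \<phi> \<in> S"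
proof (rule ccontr)
  assume m: "mcs S" and t: "CLFI \<phi>" and n: "\<phi> \<notin> S"
  then obtain L where L: "set L \<subseteq> S" "CLFI (Imp (conjL L) (Neg \<phi>))"
    using incons_insert unfolding mcs_def by blast
  have "CLFI (Neg (conjL L))"
    by (rule taut_mp2[OF t L(2)]) (auto simp: tautology_def)
  then show False using m L(1) unfolding mcs_def consistent_def by blast
qed

lemma mcs_derive:
  assumes m: "mcs S" and L: "set L \<subseteq> S" and d: "CLFI (Imp (conjL L) \<psi>)"
  shows "\<psi> \<in> S"
proof (rule ccontr)
  assume n: "\<psi> \<notin> S"
  then obtain L2 where L2: "set L2 \<subseteq> S" "CLFI (Imp (conjL L2) (Neg \<psi>))"
    using incons_insert m unfolding mcs_def by blast
  have "CLFI (Neg (conjL (L @ L2)))"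
    by (rule taut_mp2[OF d L2(2)]) (auto simp: tautology_def)
  moreover have "set (L @ L2) \<subseteq> S" using L L2 by auto
  ultimately show False using m unfolding mcs_def consistent_def by blast
qed

lemma mcs_not_both: "mcs S \<Longrightarrow> \<phi> \<in> S \<Longrightarrow> Neg \<phi> \<in> S \<Longrightarrow> False"
proof -
  assume m: "mcs S" "\<phi> \<in> S" "Neg \<phi> \<in> S"
  have "CLFI (Neg (conjL [\<phi>, Neg \<phi>]))" by (rule CLFI.taut) (simp add: tautology_def)
  moreover have "set [\<phi>, Neg \<phi>] \<subseteq> S" using m by auto
  ultimately show False using m(1) unfolding mcs_def consistent_def by blast
qed

lemma mcs_Neg: "mcs S \<Longrightarrow> Neg \<phi> \<in> S \<longleftrightarrow> \<phi> \<notin> S"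
proof
  assume "mcs S" "Neg \<phi> \<in> S" then show "\<phi> \<notin> S" using mcs_not_both by blast
next
  assume m: "mcs S" and n: "\<phi> \<notin> S"
  then obtain L where L: "set L \<subseteq> S" "CLFI (Imp (conjL L) (Neg \<phi>))"
    using incons_insert unfolding mcs_def by blast
  then show "Neg \<phi> \<in> S" using mcs_derive[OF m] by blast
qed

lemma mcs_Conj: "mcs S \<Longrightarrow> Conj a b \<in> S \<longleftrightarrow> a \<in> S \<and> b \<in> S"
proof
  assume m: "mcs S" "Conj a b \<in> S"
  have "CLFI (Imp (conjL [Conj a b]) a)" "CLFI (Imp (conjL [Conj a b]) b)"
    by (rule CLFI.taut, simp add: tautology_def)+
  then show "a \<in> S \<and> b \<in> S" using mcs_derive[OF m(1), of "[Conj a b]"] m by auto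
next
  assume m: "mcs S" "a \<in> S \<and> b \<in> S"
  have "CLFI (Imp (conjL [a, b]) (Conj a b))"
    by (rule CLFI.taut, simp add: tautology_def)
  then show "Conj a b \<in> S" using mcs_derive[OF m(1), of "[a, b]"] m by auto
qed

lemma mcs_mp: "mcs S \<Longrightarrow> CLFI (Imp a b) \<Longrightarrow> a \<in> S \<Longrightarrow> b \<in> S"
proof -
  assume m: "mcs S" "CLFI (Imp a b)" "a \<in> S"
  have "CLFI (Imp (conjL [a]) b)"
    by (rule taut_mp1[OF m(2)]) (auto simp: tautology_def)
  then show ?thesis using mcs_derive[OF m(1), of "[a]"] m by auto
qed

lemma mcs_mp2: "mcs S \<Longrightarrow> CLFI (Imp (Conj a b) c) \<Longrightarrow> a \<in> S \<Longrightarrow> b \<in> S \<Longrightarrow> c \<in> S"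
  using mcs_mp mcs_Conj by blast

lemma lindenbaum:
  assumes c: "consistent S"
  shows "\<exists>M. S \<subseteq> M \<and> mcs M"
proof -
  let ?A = "{T. S \<subseteq> T \<and> consistent T}"
  have "\<exists>M\<in>?A. \<forall>X\<in>?A. M \<subseteq> X \<longrightarrow> X = M"
  proof (rule subset_Zorn_nonempty)
    have "S \<in> ?A" using c by simp
    then show "?A \<noteq> {}" by (rule ex_in_conv[THEN iffD1, OF exI])
  next
    fix C assume ne: "C \<noteq> {}" and ch: "subset.chain ?A C"
    have sub: "C \<subseteq> ?A" using ch unfolding subset.chain_def by (elim conjE)
    obtain B0 where B0: "B0 \<in> C" using ne by blast
    have "S \<subseteq> B0" using sub B0 by auto
    then have "S \<subseteq> \<Union>C" using B0 by (rule subset_trans[OF _ Union_upper])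
    moreover have "consistent (\<Union>C)"
      unfolding consistent_def
    proof (intro allI impI)
      fix L assume L: "set L \<subseteq> \<Union>C"
      obtain B where B: "B \<in> C" "set L \<subseteq> B"
        using finite_subset_Union_chain[OF finite_set L ne ch] by blast
      have "consistent B" using sub B(1) by auto
      then show "\<not> CLFI (Neg (conjL L))" using B(2) unfolding consistent_def by simp
    qed
    ultimately show "\<Union>C \<in> ?A" by simp
  qed
  then obtain M where M1: "M \<in> ?A" and M2: "\<forall>X\<in>?A. M \<subseteq> X \<longrightarrow> X = M"
    by (elim bexE)
  have "mcs M" unfolding mcs_def
  proof (intro conjI allI impI)
    show "consistent M" using M1 by simp
  next
    fix \<phi> assume n: "\<phi> \<notin> M"
    show "\<not> consistent (insert \<phi> M)"
    proof
      assume ci: "consistent (insert \<phi> M)"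
      have "insert \<phi> M \<in> ?A" using ci M1 by auto
      then have "insert \<phi> M = M" using M2 by auto
      then show False using n by auto
    qed
  qed
  then show ?thesis using M1 by auto
qed

lemma not_derivable_mcs:
  assumes "\<not> CLFI (Imp \<psi> \<phi>)"
  shows "\<exists>w. mcs w \<and> \<psi> \<in> w \<and> \<phi> \<notin> w"
proof -
  have "consistent {\<psi>, Neg \<phi>}"
    unfolding consistent_def
  proof (intro allI impI notI)
    fix L assume L: "set L \<subseteq> {\<psi>, Neg \<phi>}" and d: "CLFI (Neg (conjL L))"
    have "tautology (Imp (Neg (conjL L)) (Imp \<psi> \<phi>))"
      unfolding tautology_def using L by auto
    then show False using taut_mp1[OF d] assms by blast
  qed
  then obtain w where "{\<psi>, Neg \<phi>} \<subseteq> w" "mcs w" using lindenbaum by blast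
  then show ?thesis using mcs_Neg by blast
qed

lemma derive_mono:
  assumes "CLFI (Imp \<phi> \<psi>)"
  shows "CLFI (Imp (Eff C \<phi>) (Eff C \<psi>))"
proof -
  have "CLFI (Iff \<phi> (Conj \<psi> \<phi>))"
    by (rule taut_mp1[OF assms]) (auto simp: tautology_def)
  then have a: "CLFI (Iff (Eff C \<phi>) (Eff C (Conj \<psi> \<phi>)))" by (rule CLFI.re)
  have b: "CLFI (Imp (Eff C (Conj \<psi> \<phi>)) (Eff C \<psi>))" by (rule CLFI.ax_mono)
  show ?thesis by (rule taut_mp2[OF a b]) (auto simp: tautology_def)
qed

lemma mcs_Eff_mono: "mcs w \<Longrightarrow> Eff C \<phi> \<in> w \<Longrightarrow> CLFI (Imp \<phi> \<psi>) \<Longrightarrow> Eff C \<psi> \<in> w"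
  using mcs_mp derive_mono by blast

lemma mcs_Eff_bot: "mcs w \<Longrightarrow> Eff C Bot \<notin> w"
  using mcs_thm[OF _ CLFI.ax_bot] mcs_not_both by blast

lemma mcs_Eff_top: "mcs w \<Longrightarrow> Eff C Top \<in> w"
  using mcs_thm[OF _ CLFI.ax_top] by blast

lemma mcs_Eff_super: "mcs w \<Longrightarrow> C \<inter> D = {} \<Longrightarrow> Eff C \<phi> \<in> w \<Longrightarrow> Eff D \<psi> \<in> w
   \<Longrightarrow> Eff (C \<union> D) (Conj \<phi> \<psi>) \<in> w"
  using mcs_mp2 CLFI.ax_super by blast

lemma mcs_Eff_N: "mcs w \<Longrightarrow> Eff {} (Neg \<phi>) \<notin> w \<Longrightarrow> Eff UNIV \<phi> \<in> w"
  using mcs_mp[OF _ CLFI.ax_N] mcs_Neg by blast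

lemma mcs_FI: "mcs w \<Longrightarrow> FI C \<phi> \<in> w \<longleftrightarrow> Eff C \<phi> \<notin> w \<and> Eff C (Neg \<phi>) \<notin> w"
proof -
  assume m: "mcs w"
  have ax: "CLFI (Iff (FI C \<phi>) (Conj (Neg (Eff C \<phi>)) (Neg (Eff C (Neg \<phi>)))))" by (rule CLFI.ax_FI)
  have 1: "CLFI (Imp (FI C \<phi>) (Conj (Neg (Eff C \<phi>)) (Neg (Eff C (Neg \<phi>)))))"
    by (rule taut_mp1[OF ax]) (auto simp: tautology_def)
  have 2: "CLFI (Imp (Conj (Neg (Eff C \<phi>)) (Neg (Eff C (Neg \<phi>)))) (FI C \<phi>))"
    by (rule taut_mp1[OF ax]) (auto simp: tautology_def)
  show ?thesis using mcs_mp[OF m 1] mcs_mp[OF m 2] mcs_Conj[OF m] mcs_Neg[OF m] by blast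
qed


section \<open>Canonical model\<close>

definition Wc :: "'a::finite fm set set" where "Wc = {S. mcs S}"

definition hat :: "'a::finite fm \<Rightarrow> 'a fm set set" where
  "hat \<phi> = {w \<in> Wc. \<phi> \<in> w}"

definition E0 :: "'a::finite fm set \<Rightarrow> 'a set \<Rightarrow> 'a fm set set set" where
  "E0 w C = {X. X \<subseteq> Wc \<and> (\<exists>\<psi>. hat \<psi> \<subseteq> X \<and> Eff C \<psi> \<in> w)}"

definition Ec :: "'a::finite fm set \<Rightarrow> 'a set \<Rightarrow> 'a fm set set set" where
  "Ec w C = (if C = UNIV then {X. X \<subseteq> Wc \<and> Wc - X \<notin> E0 w {}} else E0 w C)"

definition canon :: "('a::finite, 'a fm set) cmodel" where
  "canon = \<lparr>Wo = Wc, Ef = Ec, Va = (\<lambda>p. hat (Atom p))\<rparr>"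

lemma hat_sub: "hat \<psi> \<subseteq> hat \<phi> \<Longrightarrow> CLFI (Imp \<psi> \<phi>)"
  using not_derivable_mcs unfolding hat_def Wc_def by blast

lemma hat_Neg: "Wc - hat \<phi> = hat (Neg \<phi>)"
  unfolding hat_def Wc_def using mcs_Neg by auto

lemma hat_Conj: "hat (Conj \<phi> \<psi>) = hat \<phi> \<inter> hat \<psi>"
  unfolding hat_def Wc_def using mcs_Conj by auto

lemma hat_Top: "hat Top = Wc"
proof -
  have t: "CLFI (Top :: 'a fm)" by (rule CLFI.taut) (simp add: tautology_def)
  show ?thesis unfolding hat_def Wc_def using mcs_thm[OF _ t] by auto
qed

lemma hat_subW: "hat \<phi> \<subseteq> Wc" unfolding hat_def by auto

lemma empty_not_UNIV: "({} :: 'a set) \<noteq> UNIV" by simp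

lemma E0_hat: "w \<in> Wc \<Longrightarrow> hat \<phi> \<in> E0 w C \<longleftrightarrow> Eff C \<phi> \<in> w"
  unfolding E0_def using hat_subW hat_sub mcs_Eff_mono unfolding Wc_def by blast

lemma Ec_hat: assumes w: "w \<in> Wc" shows "hat \<phi> \<in> Ec w C \<longleftrightarrow> Eff C \<phi> \<in> w"
proof (cases "C = UNIV")
  case False then show ?thesis using E0_hat[OF w] unfolding Ec_def by simp
next
  case True
  have m: "mcs w" using w unfolding Wc_def by simp
  have "Wc - hat \<phi> \<notin> E0 w {} \<longleftrightarrow> Eff UNIV \<phi> \<in> w"
  proof
    assume "Wc - hat \<phi> \<notin> E0 w {}"
    then have "Eff {} (Neg \<phi>) \<notin> w" using E0_hat[OF w] hat_Neg by metis
    then show "Eff UNIV \<phi> \<in> w" using mcs_Eff_N[OF m] by blast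
  next
    assume u: "Eff UNIV \<phi> \<in> w"
    show "Wc - hat \<phi> \<notin> E0 w {}"
    proof
      assume "Wc - hat \<phi> \<in> E0 w {}"
      then have "Eff {} (Neg \<phi>) \<in> w" using E0_hat[OF w] hat_Neg by metis
      then have "Eff ({} \<union> UNIV) (Conj (Neg \<phi>) \<phi>) \<in> w" using mcs_Eff_super[OF m _ _ u] by blast
      then have "Eff UNIV (Conj (Neg \<phi>) \<phi>) \<in> w" by simp
      moreover have "CLFI (Imp (Conj (Neg \<phi>) \<phi>) Bot)" by (rule CLFI.taut) (simp add: tautology_def)
      ultimately have "Eff UNIV Bot \<in> w" using mcs_Eff_mono[OF m] by blast
      then show False using mcs_Eff_bot[OF m] by blast
    qed
  qed
  then show ?thesis using True hat_subW unfolding Ec_def by auto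
qed

lemma truth: "w \<in> Wc \<Longrightarrow> sat canon \<phi> w \<longleftrightarrow> \<phi> \<in> w"
proof (induction \<phi> arbitrary: w)
  case (Atom p) then show ?case by (simp add: canon_def hat_def)
next
  case (Neg \<phi>)
  have m: "mcs w" using Neg.prems unfolding Wc_def by simp
  show ?case using Neg.IH[OF Neg.prems] mcs_Neg[OF m] by simp
next
  case (Conj \<phi>1 \<phi>2)
  have m: "mcs w" using Conj.prems unfolding Wc_def by simp
  show ?case using Conj.IH[OF Conj.prems] mcs_Conj[OF m] by simp
next
  case (Eff C \<phi>)
  have "{u \<in> Wo canon. sat canon \<phi> u} = hat \<phi>" using Eff.IH by (auto simp: canon_def hat_def)
  then show ?case using Ec_hat[OF Eff.prems] by (simp add: canon_def)
next
  case (FI C \<phi>)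
  have 1: "{u \<in> Wo canon. sat canon \<phi> u} = hat \<phi>" using FI.IH by (auto simp: canon_def hat_def)
  have 2: "{u \<in> Wo canon. \<not> sat canon \<phi> u} = hat (Neg \<phi>)" using FI.IH hat_Neg[of \<phi>]
    by (auto simp: canon_def hat_def)
  have m: "mcs w" using FI.prems unfolding Wc_def by simp
  have "sat canon (FI C \<phi>) w \<longleftrightarrow> hat \<phi> \<notin> Ec w C \<and> hat (Neg \<phi>) \<notin> Ec w C"
    using 1 2 by (simp add: canon_def)
  also have "\<dots> \<longleftrightarrow> Eff C \<phi> \<notin> w \<and> Eff C (Neg \<phi>) \<notin> w"
    using Ec_hat[OF FI.prems, of \<phi> C] Ec_hat[OF FI.prems, of "Neg \<phi>" C] by simp
  also have "\<dots> \<longleftrightarrow> FI C \<phi> \<in> w" using mcs_FI[OF m] by simp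
  finally show ?case .
qed


lemma Ec_not_UNIV: "C \<noteq> UNIV \<Longrightarrow> Ec w C = E0 w C" unfolding Ec_def by simp

lemma Ec_empty: "Ec w {} = E0 w {}" unfolding Ec_def by simp

lemma Ec_UNIV: "Ec w UNIV = {X. X \<subseteq> Wc \<and> Wc - X \<notin> E0 w {}}" unfolding Ec_def by simp

lemma E0_mono: "X \<in> E0 w C \<Longrightarrow> X \<subseteq> Y \<Longrightarrow> Y \<subseteq> Wc \<Longrightarrow> Y \<in> E0 w C"
  unfolding E0_def by blast

lemma E0_super:
  assumes w: "w \<in> Wc" and cd: "C \<inter> D = {}" and X: "X \<in> E0 w C" and Y: "Y \<in> E0 w D"
  shows "\<exists>\<chi>. hat \<chi> \<subseteq> X \<inter> Y \<and> Eff (C \<union> D) \<chi> \<in> w"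
proof -
  have m: "mcs w" using w unfolding Wc_def by simp
  obtain \<phi> where 1: "hat \<phi> \<subseteq> X" "Eff C \<phi> \<in> w" using X unfolding E0_def by blast
  obtain \<psi> where 2: "hat \<psi> \<subseteq> Y" "Eff D \<psi> \<in> w" using Y unfolding E0_def by blast
  have "hat (Conj \<phi> \<psi>) \<subseteq> X \<inter> Y" using 1 2 hat_Conj by blast
  moreover have "Eff (C \<union> D) (Conj \<phi> \<psi>) \<in> w" using mcs_Eff_super[OF m cd 1(2) 2(2)] .
  ultimately show ?thesis by blast
qed

lemma empty_UNIV_contra:
  assumes w: "w \<in> Wc" and d: "hat \<chi> \<inter> hat \<theta> = {}" and 1: "Eff {} \<chi> \<in> w" and 2: "Eff UNIV \<theta> \<in> w"
  shows False
proof -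
  have m: "mcs w" using w unfolding Wc_def by simp
  have "Eff ({} \<union> UNIV) (Conj \<chi> \<theta>) \<in> w" using mcs_Eff_super[OF m _ 1 2] by simp
  then have a: "Eff UNIV (Conj \<chi> \<theta>) \<in> w" by simp
  have "hat (Conj \<chi> \<theta>) \<subseteq> hat Bot" using d hat_Conj by blast
  then have "CLFI (Imp (Conj \<chi> \<theta>) Bot)" by (rule hat_sub)
  then have "Eff UNIV Bot \<in> w" using mcs_Eff_mono[OF m a] by blast
  then show False using mcs_Eff_bot[OF m] by blast
qed

lemma super_N0:
  assumes w: "w \<in> Wc" and X: "X \<in> Ec w UNIV" and Y: "Y \<in> Ec w {}"
  shows "X \<inter> Y \<in> Ec w UNIV"
proof -
  have m: "mcs w" using w unfolding Wc_def by simp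
  have X': "X \<subseteq> Wc" "Wc - X \<notin> E0 w {}" using X unfolding Ec_UNIV by auto
  have Y': "Y \<in> E0 w {}" using Y unfolding Ec_def by simp
  obtain \<psi> where 2: "hat \<psi> \<subseteq> Y" "Eff {} \<psi> \<in> w" using Y' unfolding E0_def by blast
  have "Wc - (X \<inter> Y) \<notin> E0 w {}"
  proof
    assume "Wc - (X \<inter> Y) \<in> E0 w {}"
    then obtain \<chi> where 1: "hat \<chi> \<subseteq> Wc - (X \<inter> Y)" "Eff {} \<chi> \<in> w" unfolding E0_def by blast
    have "Eff ({} \<union> {}) (Conj \<chi> \<psi>) \<in> w" using mcs_Eff_super[OF m _ 1(2) 2(2)] by simp
    then have "Eff {} (Conj \<chi> \<psi>) \<in> w" by simp
    moreover have "hat (Conj \<chi> \<psi>) \<subseteq> Wc - X" using 1 2 hat_Conj hat_subW by blast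
    ultimately have "Wc - X \<in> E0 w {}" unfolding E0_def by blast
    then show False using X' by blast
  qed
  then show ?thesis using X' unfolding Ec_UNIV by auto
qed

lemma playable_canon:
  assumes ne: "Wc \<noteq> ({} :: 'a::finite fm set set)"
  shows "playable (canon :: ('a, 'a fm set) cmodel)"
proof -
  have cm: "coalition_model (canon :: ('a, 'a fm set) cmodel)"
    unfolding coalition_model_def canon_def using ne hat_subW
    by (auto simp: Ec_def E0_def)
  have "playable_at (canon :: ('a, 'a fm set) cmodel) w" if w: "w \<in> Wc" for w :: "'a fm set"
  proof -
    have m: "mcs w" using w unfolding Wc_def by simp
    have EW: "Wc \<in> Ec w C" for C
    proof -
      have "hat Top \<in> Ec w C" using Ec_hat[OF w, of Top C] mcs_Eff_top[OF m, of C] by (rule iffD2)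
      then show ?thesis unfolding hat_Top .
    qed
    have E0W: "Wc \<in> E0 w {}" using EW[of "{}"] unfolding Ec_def by simp
    have p1: "{} \<notin> Ec w C" for C
    proof (cases "C = UNIV")
      case True then show ?thesis using E0W unfolding Ec_def by simp
    next
      case False
      show ?thesis
      proof
        assume "{} \<in> Ec w C"
        then obtain \<psi> where "hat \<psi> \<subseteq> {}" "Eff C \<psi> \<in> w" using False unfolding Ec_def E0_def by auto
        then have "CLFI (Imp \<psi> Bot)" "Eff C \<psi> \<in> w" using hat_sub by blast+
        then have "Eff C Bot \<in> w" using mcs_Eff_mono[OF m] by blast
        then show False using mcs_Eff_bot[OF m] by blast
      qed
    qed
    have p3: "Y \<in> Ec w C" if "X \<subseteq> Wc" "Y \<subseteq> Wc" "X \<in> Ec w C" "X \<subseteq> Y" for C X Y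
    proof (cases "C = UNIV")
      case True
      have "Wc - Y \<subseteq> Wc - X" using that by blast
      moreover have "Wc - X \<notin> E0 w {}" using that(3) True unfolding Ec_def by simp
      ultimately have "Wc - Y \<notin> E0 w {}" using E0_mono[of "Wc - Y" w "{}" "Wc - X"] by blast
      then show ?thesis using that(2) True unfolding Ec_def by simp
    next
      case False then show ?thesis using that E0_mono unfolding Ec_def by simp
    qed
    have p4: "X \<inter> Y \<in> Ec w (C \<union> D)"
      if h: "X \<subseteq> Wc" "Y \<subseteq> Wc" "C \<inter> D = {}" "X \<in> Ec w C" "Y \<in> Ec w D" for C D X Y
    proof (cases "C = UNIV")
      case True
      then have "D = {}" using h(3) by simp
      then show ?thesis using super_N0[OF w] h True by simp
    next
      case CN: False
      show ?thesis
      proof (cases "D = UNIV")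
        case True
        then have "C = {}" using h(3) by simp
        then show ?thesis using super_N0[OF w, of Y X] h True by (simp add: Int_commute)
      next
        case DN: False
        have X0: "X \<in> E0 w C" using h CN Ec_not_UNIV by metis
        have Y0: "Y \<in> E0 w D" using h DN Ec_not_UNIV by metis
        obtain \<theta> where th: "hat \<theta> \<subseteq> X \<inter> Y" "Eff (C \<union> D) \<theta> \<in> w"
          using E0_super[OF w h(3) X0 Y0] by blast
        show ?thesis
        proof (cases "C \<union> D = UNIV")
          case False
          then show ?thesis using th h(1,2) Ec_not_UNIV[OF False] unfolding E0_def by blast
        next
          case True
          have "Wc - (X \<inter> Y) \<notin> E0 w {}"
          proof
            assume "Wc - (X \<inter> Y) \<in> E0 w {}"
            then obtain \<chi> where 1: "hat \<chi> \<subseteq> Wc - (X \<inter> Y)" "Eff {} \<chi> \<in> w" unfolding E0_def by blast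
            have "hat \<chi> \<inter> hat \<theta> = {}" using 1 th by blast
            then show False using empty_UNIV_contra[OF w _ 1(2)] th True by metis
          qed
          then have "X \<inter> Y \<in> Ec w UNIV" using h(1,2) unfolding Ec_UNIV by blast
          then show ?thesis using True by simp
        qed
      qed
    qed
    have p5: "X \<notin> Ec w {} \<longleftrightarrow> Wc - X \<in> Ec w UNIV" if "X \<subseteq> Wc" for X
    proof -
      have "Wc - (Wc - X) = X" using that by blast
      then show ?thesis unfolding Ec_UNIV Ec_empty using that by auto
    qed
    show ?thesis unfolding playable_at_def canon_def cmodel.select_convs
    proof (intro conjI allI impI)
      fix C show "{} \<notin> Ec w C" by (rule p1)
    next
      fix C show "Wc \<in> Ec w C" by (rule EW)
    next
      fix C X Y assume "X \<subseteq> Wc" "Y \<subseteq> Wc" "X \<in> Ec w C" "X \<subseteq> Y"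
      then show "Y \<in> Ec w C" by (rule p3)
    next
      fix C D X Y assume "X \<subseteq> Wc" "Y \<subseteq> Wc" "C \<inter> D = {}" "X \<in> Ec w C" "Y \<in> Ec w D"
      then show "X \<inter> Y \<in> Ec w (C \<union> D)" by (rule p4)
    next
      fix X :: "'a fm set set" assume "X \<subseteq> Wc"
      then show "X \<notin> Ec w {} \<longleftrightarrow> Wc - X \<in> Ec w UNIV" by (rule p5)
    qed
  qed
  then show ?thesis using cm unfolding playable_def by (simp add: canon_def)
qed

lemma completeness:
  assumes v: "\<forall>M :: ('a::finite, 'a fm set) cmodel. playable M \<longrightarrow> valid_in M \<phi>"
  shows "CLFI \<phi>"
proof (rule ccontr)
  assume n: "\<not> CLFI \<phi>"
  have "\<not> CLFI (Imp Top \<phi>)"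
  proof
    assume "CLFI (Imp Top \<phi>)"
    moreover have "CLFI (Top :: 'a fm)" by (rule CLFI.taut) (simp add: tautology_def)
    ultimately show False using n CLFI.mp by blast
  qed
  then obtain w where w: "mcs w" "\<phi> \<notin> w" using not_derivable_mcs by blast
  then have wW: "w \<in> Wc" unfolding Wc_def by simp
  then have "Wc \<noteq> ({} :: 'a fm set set)" by blast
  then have "playable (canon :: ('a, 'a fm set) cmodel)" by (rule playable_canon)
  then have "valid_in canon \<phi>" using v by blast
  then have "sat canon \<phi> w" using wW unfolding valid_in_def by (simp add: canon_def)
  then show False using truth[OF wW] w by simp
qed

theorem mainTheorem18:
  fixes \<phi> :: "'a::finite fm"
  shows "(CLFI \<phi> \<longrightarrow> (\<forall>M :: ('a, 'w) cmodel. playable M \<longrightarrow> valid_in M \<phi>))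
       \<and> ((\<forall>M :: ('a, 'a fm set) cmodel. playable M \<longrightarrow> valid_in M \<phi>) \<longrightarrow> CLFI \<phi>)"
  using soundness completeness by blast

end
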